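(* If $\mathcal{T}^{\mathrm{Exp}(\mu)}\geq_{\mathrm{st}}\mathcal{T}$ for all $\mu\in(0,\infty)$, then $\overline{F}(0)=1$.
   Context: Standing assumptions: $\mathcal{T}$ is a probability law on the Borel sets of $[0,\infty]$ with $\mathcal{T}((0,\infty])>0$ and $\inf\mathrm{supp}(\mathcal{T})=0$; $\overline{F}(t):=\mathcal{T}((t,\infty])$. For $\mu>0$: let $(T_k)$ be i.i.d. with law $\mathcal{T}$ and $(R_k)$ an independent i.i.d. sequence of exponential random variables with mean $\mu^{-1}$; $\mathcal{T}^{\mathrm{Exp}(\mu)}$ is the law of $\tilde T$ defined a.s. by $\tilde T=R_1+\cdots+R_{k-1}+T_k$ on $\{R_1<T_1,\ldots,R_{k-1}<T_{k-1},T_k\leq R_k\}$, $k\in\mathbb{N}$. $\mathcal{A}\geq_{\mathrm{st}}\mathcal{B}$ means $\mathcal{A}((t,\infty])\geq\mathcal{B}((t,\infty])$ for all $t\in[0,\infty)$. *)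

theory Defs
  imports "HOL-Probability.Probability"
begin

definition Fbar :: "ennreal measure \<Rightarrow> ennreal \<Rightarrow> real" where
  "Fbar T t = measure T {t<..}"

definition measure_support :: "ennreal measure \<Rightarrow> ennreal set" where
  "measure_support T = {x. \<forall>U. open U \<longrightarrow> x \<in> U \<longrightarrow> 0 < emeasure T U}"

definition stoch_ge :: "ennreal measure \<Rightarrow> ennreal measure \<Rightarrow> bool" where
  "stoch_ge A B \<longleftrightarrow> (\<forall>t::ennreal. t < \<infinity> \<longrightarrow> measure B {t<..} \<le> measure A {t<..})"

text \<open>Canonical probability space for the i.i.d. pairs (T_k, R_k), k = 0,1,2,...:
  T_k with law T, R_k exponential with rate \<mu> (mean 1/\<mu>), all independent.\<close>
definition exp_space :: "ennreal measure \<Rightarrow> real \<Rightarrow> (nat \<Rightarrow> ennreal \<times> real) measure" where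
  "exp_space T \<mu> = PiM UNIV (\<lambda>_::nat. T \<Otimes>\<^sub>M density lborel (\<lambda>x. ennreal (exponential_density \<mu> x)))"

text \<open>Ttilde = R_0 + ... + R_{k-1} + T_k where k is the first index with T_k \<le> R_k
  (0-based indexing). On the null event that no such k exists we put \<infinity>.\<close>
definition exp_Ttilde :: "(nat \<Rightarrow> ennreal \<times> real) \<Rightarrow> ennreal" where
  "exp_Ttilde \<omega> =
     (if \<exists>k. fst (\<omega> k) \<le> ennreal (snd (\<omega> k))
      then (let k = (LEAST k. fst (\<omega> k) \<le> ennreal (snd (\<omega> k)))
            in ennreal (\<Sum>i<k. snd (\<omega> i)) + fst (\<omega> k))
      else \<infinity>)"

definition exp_mix :: "ennreal measure \<Rightarrow> real \<Rightarrow> ennreal measure" where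
  "exp_mix T \<mu> = distr (exp_space T \<mu>) borel exp_Ttilde"

end

theory Submission imports Defs begin
lemma ptwise:
  fixes t :: real and n j :: nat and \<omega> :: "nat \<Rightarrow> ennreal \<times> real"
  assumes n: "0 < n" and j: "j < n" and z: "fst (\<omega> j) = 0" and b: "\<forall>i<n. snd (\<omega> i) \<le> t / n"
    and t: "0 \<le> t"
  shows "exp_Ttilde \<omega> \<le> ennreal t"
proof -
  let ?P = "\<lambda>k. fst (\<omega> k) \<le> ennreal (snd (\<omega> k))"
  have Pj: "?P j" using z by simp
  have ex: "\<exists>k. ?P k" using Pj by (rule exI)
  define K where "K = (LEAST k. ?P k)"
  have PK: "?P K" unfolding K_def by (rule LeastI[of ?P j, OF Pj])
  have Kj: "K \<le> j" unfolding K_def by (rule Least_le[of ?P j, OF Pj])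
  have eq: "exp_Ttilde \<omega> = ennreal (\<Sum>i<K. snd (\<omega> i)) + fst (\<omega> K)"
    unfolding exp_Ttilde_def if_P[OF ex] Let_def K_def ..
  have "(\<Sum>i<K. snd (\<omega> i)) \<le> (\<Sum>i<K. t / n)"
    using b Kj j by (intro sum_mono) simp
  hence s1: "(\<Sum>i<K. snd (\<omega> i)) \<le> K * (t / n)" by simp
  have s2: "snd (\<omega> K) \<le> t / n" using b Kj j by simp
  have f: "fst (\<omega> K) \<le> ennreal (t / n)"
    by (rule order_trans[OF PK ennreal_leI[OF s2]])
  have c: "K * (t / n) + t / n \<le> t"
  proof -
    have "K * (t / n) + t / n = (K + 1) * (t / n)" by (simp add: algebra_simps add_divide_distrib)
    also have "\<dots> \<le> n * (t / n)"
      using Kj j t by (intro mult_right_mono) auto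
    also have "\<dots> = t" using n by simp
    finally show ?thesis .
  qed
  have "exp_Ttilde \<omega> \<le> ennreal (K * (t / n)) + ennreal (t / n)"
    unfolding eq by (rule add_mono[OF ennreal_leI[OF s1] f])
  also have "\<dots> = ennreal (K * (t / n) + t / n)"
    using t by (intro ennreal_plus[symmetric]) auto
  also have "\<dots> \<le> ennreal t" using c by (rule ennreal_leI)
  finally show ?thesis .
qed

lemma emeasure_distr_le:
  "emeasure (distr M N f) A \<le> emeasure M (f -` A \<inter> space M)"
  unfolding distr_def emeasure_measure_of_conv by auto

abbreviation "Expo \<mu> \<equiv> density lborel (\<lambda>x. ennreal (exponential_density \<mu> x))"

lemma Ex_tail:
  assumes "0 < \<mu>" "0 \<le> s"
  shows "emeasure (Expo \<mu>) {s<..} = ennreal (exp (- s * \<mu>))"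
proof -
  interpret E: prob_space "Expo \<mu>" using prob_space_exponential_density[OF assms(1)] .
  have D: "distributed (Expo \<mu>) lborel (\<lambda>x. x) (exponential_density \<mu>)"
    by (auto simp: distributed_def distr_id2)
  have "E.prob {x \<in> space (Expo \<mu>). s < x} = exp (- s * \<mu>)"
    using E.exponential_distributedD_gt[OF D assms(2) assms(1)] by simp
  moreover have "{x \<in> space (Expo \<mu>). s < x} = {s<..}" by auto
  ultimately show ?thesis by (simp add: E.emeasure_eq_measure)
qed

locale setup_T =
  fixes T :: "ennreal measure" and \<mu> :: real
  assumes T: "prob_space T" and ST: "sets T = sets borel" and mu: "0 < \<mu>"
begin

definition "Q = T \<Otimes>\<^sub>M Expo \<mu>"

lemma spT: "space T = UNIV" using sets_eq_imp_space_eq[OF ST] by simp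

lemma Q_prob: "prob_space Q"
  unfolding Q_def
  by (intro prob_space_pair T prob_space_exponential_density mu)

lemma spQ: "space Q = UNIV" unfolding Q_def by (simp add: space_pair_measure spT)

lemma P_eq: "exp_space T \<mu> = PiM UNIV (\<lambda>_. Q)" unfolding exp_space_def Q_def ..

lemma P_prob: "prob_space (exp_space T \<mu>)"
proof -
  interpret PP: product_prob_space "\<lambda>_::nat. Q" UNIV
    using product_prob_spaceI[of "\<lambda>_::nat. Q"] Q_prob by (simp add: product_prob_space_def)
  show ?thesis unfolding P_eq by (rule PP.P.prob_space_axioms)
qed

lemma spP: "space (exp_space T \<mu>) = UNIV" unfolding P_eq by (simp add: space_PiM spQ)

lemma emb_eq: "prod_emb UNIV (\<lambda>_. Q) J (PiE J A) = {\<omega>. \<forall>j\<in>J. \<omega> j \<in> A j}"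
  by (auto simp: prod_emb_def spQ PiE_iff)

lemma A1: "emeasure (exp_space T \<mu>) {\<omega>. \<forall>j<n. fst (\<omega> j) \<noteq> 0} = (emeasure T (-{0}))^n"
proof -
  interpret E: prob_space "Expo \<mu>" using prob_space_exponential_density[OF mu] .
  have "{\<omega>. \<forall>j<n. fst (\<omega> j) \<noteq> 0} = prod_emb UNIV (\<lambda>_. Q) {..<n} (PiE {..<n} (\<lambda>_. (-{0}) \<times> UNIV))"
    unfolding emb_eq by (auto simp: mem_Times_iff)
  also have "emeasure (PiM UNIV (\<lambda>_. Q)) \<dots> = (\<Prod>i\<in>{..<n}. emeasure Q ((-{0}) \<times> UNIV))"
    by (rule emeasure_PiM_emb) (auto simp: Q_prob[unfolded Q_def] Q_def ST)
  also have "emeasure Q ((-{0}) \<times> UNIV) = emeasure T (-{0})"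
    unfolding Q_def using E.emeasure_space_1
    by (subst E.emeasure_pair_measure_Times) (auto simp: ST)
  finally show ?thesis by (simp add: P_eq)
qed

lemma A2: assumes "0 \<le> s"
  shows "emeasure (exp_space T \<mu>) {\<omega>. s < snd (\<omega> i)} = ennreal (exp (- s * \<mu>))"
proof -
  interpret E: prob_space "Expo \<mu>" using prob_space_exponential_density[OF mu] .
  interpret TT: prob_space T by (rule T)
  have "{\<omega>. s < snd (\<omega> i)} = prod_emb UNIV (\<lambda>_. Q) {i} (PiE {i} (\<lambda>_. UNIV \<times> {s<..}))"
    unfolding emb_eq by (auto simp: mem_Times_iff)
  also have "emeasure (PiM UNIV (\<lambda>_. Q)) \<dots> = (\<Prod>i\<in>{i}. emeasure Q (UNIV \<times> {s<..}))"
    by (rule emeasure_PiM_emb) (auto simp: Q_prob[unfolded Q_def] Q_def ST)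
  also have "emeasure Q (UNIV \<times> {s<..}) = emeasure (Expo \<mu>) {s<..}"
    unfolding Q_def using TT.emeasure_space_1 spT
    by (subst E.emeasure_pair_measure_Times) (auto simp: ST)
  finally show ?thesis by (simp add: P_eq Ex_tail mu assms)
qed

lemma A1_sets: "{\<omega>. \<forall>j<n. fst (\<omega> j) \<noteq> 0} \<in> sets (exp_space T \<mu>)"
proof -
  have "{\<omega>. \<forall>j<n. fst (\<omega> j) \<noteq> 0} = prod_emb UNIV (\<lambda>_. Q) {..<n} (PiE {..<n} (\<lambda>_. (-{0}) \<times> UNIV))"
    unfolding emb_eq by (auto simp: mem_Times_iff)
  also have "\<dots> \<in> sets (PiM UNIV (\<lambda>_. Q))"
    by (rule sets_PiM_I) (auto simp: Q_def ST)
  finally show ?thesis by (simp add: P_eq)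
qed

lemma A2_sets: "{\<omega>. s < snd (\<omega> i)} \<in> sets (exp_space T \<mu>)"
proof -
  have "{\<omega>. s < snd (\<omega> i)} = prod_emb UNIV (\<lambda>_. Q) {i} (PiE {i} (\<lambda>_. UNIV \<times> {s<..}))"
    unfolding emb_eq by (auto simp: mem_Times_iff)
  also have "\<dots> \<in> sets (PiM UNIV (\<lambda>_. Q))"
    by (rule sets_PiM_I) (auto simp: Q_def ST)
  finally show ?thesis by (simp add: P_eq)
qed

lemma bound:
  fixes t :: real and n :: nat
  assumes t: "0 < t" and n: "0 < n"
  shows "emeasure (exp_mix T \<mu>) {ennreal t<..} \<le>
     (emeasure T (-{0}))^n + of_nat n * ennreal (exp (- (t / n) * \<mu>))"
proof -
  let ?P = "exp_space T \<mu>"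
  define A :: "(nat \<Rightarrow> ennreal \<times> real) set" where "A = {\<omega>. \<forall>j<n. fst (\<omega> j) \<noteq> 0}"
  define C :: "nat \<Rightarrow> (nat \<Rightarrow> ennreal \<times> real) set" where "C = (\<lambda>i. {\<omega>. t / n < snd (\<omega> i)})"
  have AS: "A \<in> sets ?P" unfolding A_def by (rule A1_sets)
  have CS: "\<And>i. C i \<in> sets ?P" unfolding C_def by (rule A2_sets)
  have US: "(\<Union>i<n. C i) \<in> sets ?P" using CS by auto
  have sub: "exp_Ttilde -` {ennreal t<..} \<inter> space ?P \<subseteq> A \<union> (\<Union>i<n. C i)"
  proof
    fix \<omega> assume w: "\<omega> \<in> exp_Ttilde -` {ennreal t<..} \<inter> space ?P"
    show "\<omega> \<in> A \<union> (\<Union>i<n. C i)"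
    proof (rule ccontr)
      assume "\<omega> \<notin> A \<union> (\<Union>i<n. C i)"
      then obtain j where j: "j < n" "fst (\<omega> j) = 0" and b: "\<forall>i<n. snd (\<omega> i) \<le> t / n"
        unfolding A_def C_def by (auto simp: not_less)
      have "exp_Ttilde \<omega> \<le> ennreal t"
        using ptwise[OF n j b] t by simp
      with w show False by auto
    qed
  qed
  have "emeasure (exp_mix T \<mu>) {ennreal t<..} \<le> emeasure ?P (exp_Ttilde -` {ennreal t<..} \<inter> space ?P)"
    unfolding exp_mix_def by (rule emeasure_distr_le)
  also have "\<dots> \<le> emeasure ?P (A \<union> (\<Union>i<n. C i))"
    using sub AS US by (intro emeasure_mono) auto
  also have "\<dots> \<le> emeasure ?P A + emeasure ?P (\<Union>i<n. C i)"
    using AS US by (rule emeasure_subadditive)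
  also have "emeasure ?P (\<Union>i<n. C i) \<le> (\<Sum>i<n. emeasure ?P (C i))"
    using CS by (intro emeasure_subadditive_finite) auto
  also have "(\<Sum>i<n. emeasure ?P (C i)) = of_nat n * ennreal (exp (- (t / n) * \<mu>))"
    unfolding C_def using t by (simp add: A2)
  finally show ?thesis unfolding A_def A1 by (simp add: add_mono)
qed

end


theorem mainTheorem13:
  fixes T :: "ennreal measure"
  assumes "prob_space T"
    and "sets T = sets borel"
    and "measure T {0<..} > 0"
    and "Inf (measure_support T) = 0"
    and "\<forall>\<mu>::real. \<mu> > 0 \<longrightarrow> stoch_ge (exp_mix T \<mu>) T"
  shows "Fbar T 0 = 1"
proof (rule ccontr)
  assume ne: "Fbar T 0 \<noteq> 1"
  interpret TT: prob_space T by (rule assms(1))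
  have spT: "space T = UNIV" using sets_eq_imp_space_eq[OF assms(2)] by simp
  have c0: "{0::ennreal<..} = -{0}" by (auto simp: zero_less_iff_neq_zero)
  define p where "p = measure T {0}"
  have Fb: "Fbar T 0 = 1 - p"
    unfolding Fbar_def p_def c0 using TT.prob_compl[of "{0}"] spT by (simp add: Compl_eq_Diff_UNIV assms(2))
  have p0: "0 < p" using ne Fb measure_nonneg[of T "{0}"] unfolding p_def by linarith
  have p1: "1 - p < 1" "0 \<le> 1 - p" using p0 TT.prob_le_1[of "{0}"] unfolding p_def by auto
  have emC: "emeasure T (-{0}) = ennreal (1 - p)"
    using TT.emeasure_eq_measure[of "-{0}"] Fb unfolding Fbar_def c0 by simp
  obtain t :: real where t: "0 < t" and c: "0 < measure T {ennreal t<..}"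
  proof -
    have "\<exists>t::real. 0 < t \<and> 0 < measure T {ennreal t<..}"
    proof (rule ccontr)
      assume "\<not> ?thesis"
      hence z: "\<And>m::nat. emeasure T {ennreal (1 / Suc m)<..} = 0"
        using TT.emeasure_eq_measure measure_nonneg
        by (metis ennreal_0 not_less order_antisym of_nat_0_less_iff zero_less_Suc zero_less_divide_1_iff)
      have "emeasure T (\<Union>m. {ennreal (1 / Suc m)<..}) = 0"
        using z by (intro emeasure_UN_eq_0) (auto simp: assms(2))
      moreover have "(\<Union>m. {ennreal (1 / Suc m)<..}) = {0<..}"
      proof safe
        fix x :: ennreal and m :: nat assume "ennreal (1 / Suc m) < x" thus "0 < x"
          using order_le_less_trans[OF zero_le] by blast
      next
        fix x :: ennreal assume x: "0 < x"
        show "x \<in> (\<Union>m. {ennreal (1 / Suc m)<..})"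
        proof (cases x)
          case (real r)
          with x have "0 < r" by (auto simp: ennreal_less_iff)
          then obtain m where "inverse (real (Suc m)) < r" using reals_Archimedean by blast
          thus ?thesis using real \<open>0 < r\<close>
            by (auto simp: ennreal_less_iff inverse_eq_divide)
        next
          case top
          thus ?thesis by (auto intro!: exI[of _ 0])
        qed
      qed
      ultimately have "measure T {0<..} = 0" by (simp add: measure_def)
      with assms(3) show False by simp
    qed
    thus ?thesis using that by blast
  qed
  define c where "c = measure T {ennreal t<..}"
  have cpos: "0 < c" using c unfolding c_def .
  obtain n0 where n0: "(1 - p)^n0 < c / 2" using real_arch_pow_inv[of "c/2" "1 - p"] cpos p1 by auto
  define n where "n = Suc n0"
  have npos: "0 < n" unfolding n_def by simp
  have pn: "(1 - p)^n < c / 2"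
    using power_decreasing[of n0 n "1 - p"] p1 n0 unfolding n_def by force
  define s where "s = t / n"
  have spos: "0 < s" unfolding s_def using t npos by simp
  define \<mu> where "\<mu> = 2 * n / (c * s) + 1"
  have mpos: "0 < \<mu>" unfolding \<mu>_def using cpos spos by (intro add_nonneg_pos divide_nonneg_pos) auto
  have "2 * n / c < s * \<mu>" unfolding \<mu>_def using cpos spos by (simp add: field_simps)
  also have "s * \<mu> < exp (s * \<mu>)" using exp_gt_self by blast
  finally have "2 * n / c < exp (s * \<mu>)" .
  hence en: "n * exp (- s * \<mu>) < c / 2"
    using cpos npos by (simp add: exp_minus field_simps)
  interpret S: setup_T T \<mu> using assms(1,2) mpos by unfold_locales
  have "emeasure (exp_mix T \<mu>) {ennreal t<..} \<le> (ennreal (1 - p))^n + of_nat n * ennreal (exp (- (t / n) * \<mu>))"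
    using S.bound[OF t npos] emC by simp
  also have "\<dots> = ennreal ((1 - p)^n + n * exp (- s * \<mu>))"
    using p1 unfolding s_def by (simp add: ennreal_power ennreal_of_nat_eq_real_of_nat ennreal_mult'' ennreal_plus)
  finally have le: "emeasure (exp_mix T \<mu>) {ennreal t<..} \<le> ennreal ((1 - p)^n + n * exp (- s * \<mu>))" .
  have "measure (exp_mix T \<mu>) {ennreal t<..} \<le> (1 - p)^n + n * exp (- s * \<mu>)"
    unfolding measure_def using le p1 by (intro enn2real_leI) auto
  also have "\<dots> < c" using pn en by linarith
  finally have "measure (exp_mix T \<mu>) {ennreal t<..} < c" .
  moreover have "c \<le> measure (exp_mix T \<mu>) {ennreal t<..}"
    using assms(5) mpos unfolding stoch_ge_def c_def by auto
  ultimately show False by simp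
qed
end
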